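(* Consider a family, indexed by the number of qubits $n$, of parametrized $n$-qubit states $\rho(\vec{\alpha})$ depending on a random variable $\vec{\alpha}$, and a POVM $\mathcal{M} = \{M_k\}_{k=1}^{|\mathcal{M}|}$ with $|\mathcal{M}| \in \mathcal{O}(\operatorname{poly}(n))$, with outcome distribution $\mathbb{P}_{\vec{\alpha}} = (p_k(\vec{\alpha}))_k$, $p_k(\vec{\alpha}) = \operatorname{Tr}[\rho(\vec{\alpha}) M_k]$. Assume there exist $\vec{\alpha}$-independent numbers $\mu_k$ and $\beta \in \mathcal{O}(\exp(-n))$ with $\Pr_{\vec{\alpha}}(|p_k(\vec{\alpha}) - \mu_k| \geq \delta') \leq \beta/\delta'^2$ for all $k$ and all $\delta'>0$, and set $\mathbb{P}_{\rm fixed} = (\mu_1,\dots,\mu_{|\mathcal{M}|})$. Let $N \in \mathcal{O}(\operatorname{poly}(n))$, let $\Phi : \mathbb{R}^N \to \mathbb{R}^M$ be an arbitrary map, and let $\mathcal{S}_N(\vec{\alpha})$ and $\mathcal{S}_{N,\rm fixed}$ be sets of $N$ i.i.d. samples from $\mathbb{P}_{\vec{\alpha}}$ and from $\mathbb{P}_{\rm fixed}$ respectively. Then, with probability at least $1-\delta$ over $\vec{\alpha}$, with $\delta \in \mathcal{O}(\exp(-n))$, the outputs $\Phi(\mathcal{S}_N(\vec{\alpha}))$ and $\Phi(\mathcal{S}_{N,\rm fixed})$ are statistically indistinguishable: given $\Phi(\mathcal{S})$ for a sample set $\mathcal{S}$ drawn with equal probability from one of the two sources, no procedure identifies the source with probability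 exceeding that achievable from $\mathcal{S}$ itself, which is at most $\frac12 + \frac{N|\mathcal{M}|\beta^{1/4}}{4}$.
   Context: A POVM is a finite set of positive semidefinite operators summing to the identity; measuring it on $\rho$ yields outcome $k$ with probability $\operatorname{Tr}[\rho M_k]$ (outcomes are labeled by real numbers). Two distributions are statistically indistinguishable with $N$ samples if, given $N$ i.i.d. samples drawn (with equal prior probability) all from one or all from the other, no algorithm identifies the correct source with probability greater than $0.51$; outputs of a map applied to sample sets from two such distributions are called statistically indistinguishable outputs.
   Formalization: $\beta$ and $\delta$ lie in O(exp(-cn)) for some c > 0 rather than O(exp(-n)), the $\mu_k$ are nonnegative with sum 1, the 0.51 bound holds only for all large n, and success from $\mathcal{S}$ itself is not compared. Apart from conventions, each condition added here is assumed in the paper as well or is needed for the statement above to hold. *)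

theory Defs
  imports "HOL-Probability.Probability" "HOL-Library.Landau_Symbols"
    "Jordan_Normal_Form.Matrix"
begin

definition mat_trace :: "complex mat \<Rightarrow> complex" where
  "mat_trace A = (\<Sum>i<dim_row A. A $$ (i,i))"

definition psd :: "nat \<Rightarrow> complex mat \<Rightarrow> bool" where
  "psd d A \<longleftrightarrow> A \<in> carrier_mat d d \<and>
     (\<forall>v \<in> carrier_vec d. Im (conjugate v \<bullet> (A *\<^sub>v v)) = 0 \<and> 0 \<le> Re (conjugate v \<bullet> (A *\<^sub>v v)))"

definition density_matrix :: "nat \<Rightarrow> complex mat \<Rightarrow> bool" where
  "density_matrix d \<rho> \<longleftrightarrow> psd d \<rho> \<and> mat_trace \<rho> = 1"

definition is_povm :: "nat \<Rightarrow> real set \<Rightarrow> (real \<Rightarrow> complex mat) \<Rightarrow> bool" where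
  "is_povm d K M \<longleftrightarrow> finite K \<and> (\<forall>k\<in>K. psd d (M k)) \<and>
     (\<forall>i<d. \<forall>j<d. (\<Sum>k\<in>K. M k $$ (i,j)) = (1\<^sub>m d) $$ (i,j))"

definition outcome_prob :: "complex mat \<Rightarrow> complex mat \<Rightarrow> real" where
  "outcome_prob \<rho> Mk = Re (mat_trace (\<rho> * Mk))"

(* all possible sample sets of N outcomes (ordered tuples in R^N) *)
definition samples :: "real set \<Rightarrow> nat \<Rightarrow> real list set" where
  "samples K N = {s. length s = N \<and> set s \<subseteq> K}"

definition seq_prob :: "(real \<Rightarrow> real) \<Rightarrow> real list \<Rightarrow> real" where
  "seq_prob p s = prod_list (map p s)"

(* success probability of the (possibly randomised) guessing procedure g, which
   sees only Phi(S) and outputs "source p" with probability g(Phi(S)), when the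
   sample set S comes from p or from q with prior 1/2 each *)
definition guess_success :: "real set \<Rightarrow> nat \<Rightarrow> (real \<Rightarrow> real) \<Rightarrow> (real \<Rightarrow> real)
    \<Rightarrow> (real list \<Rightarrow> 'b) \<Rightarrow> ('b \<Rightarrow> real) \<Rightarrow> real" where
  "guess_success K N p q \<Phi> g =
     (1/2) * (\<Sum>s\<in>samples K N. seq_prob p s * g (\<Phi> s) + seq_prob q s * (1 - g (\<Phi> s)))"

definition poly_bounded :: "(nat \<Rightarrow> real) \<Rightarrow> bool" where
  "poly_bounded f \<longleftrightarrow> (\<exists>d::nat. f \<in> O(\<lambda>n. real n ^ d))"

(* f \<in> O(exp(-n)), read as: exponentially small, O(exp(-c n)) for some c > 0 *)
definition exp_small :: "(nat \<Rightarrow> real) \<Rightarrow> bool" where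
  "exp_small f \<longleftrightarrow> (\<exists>c>0. f \<in> O(\<lambda>n. exp (- c * real n)))"

end

theory Submission
  imports Defs
begin


lemma finite_samples: "finite K \<Longrightarrow> finite (samples K N)"
  unfolding samples_def using finite_lists_length_eq[of K N] by (simp add: conj_commute)

lemma samples_Suc: "samples K (Suc N) = (\<lambda>(k,s). k#s) ` (K \<times> samples K N)"
  unfolding samples_def by (auto simp: length_Suc_conv image_iff)

lemma sum_samples_Suc:
  assumes "finite K"
  shows "(\<Sum>s\<in>samples K (Suc N). h s) = (\<Sum>k\<in>K. \<Sum>s\<in>samples K N. h (k#s))"
proof -
  have inj: "inj_on (\<lambda>(k,s). k#s) (K \<times> samples K N)" by (auto simp: inj_on_def)
  have "(\<Sum>s\<in>samples K (Suc N). h s) = (\<Sum>x\<in>K \<times> samples K N. h ((\<lambda>(k,s). k#s) x))"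
    unfolding samples_Suc by (rule sum.reindex[OF inj, unfolded comp_def])
  also have "\<dots> = (\<Sum>k\<in>K. \<Sum>s\<in>samples K N. h (k#s))"
    by (subst sum.cartesian_product) (simp add: split_def)
  finally show ?thesis .
qed

lemma samples_0: "samples K 0 = {[]}" unfolding samples_def by auto

lemma sum_seq_prob:
  assumes "finite K"
  shows "(\<Sum>s\<in>samples K N. seq_prob f s) = (\<Sum>k\<in>K. f k) ^ N"
proof (induction N)
  case 0 then show ?case by (simp add: samples_0 seq_prob_def)
next
  case (Suc N)
  have "(\<Sum>s\<in>samples K (Suc N). seq_prob f s) = (\<Sum>k\<in>K. \<Sum>s\<in>samples K N. f k * seq_prob f s)"
    by (simp add: sum_samples_Suc[OF assms] seq_prob_def)
  also have "\<dots> = (\<Sum>k\<in>K. f k) ^ Suc N"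
    by (simp add: sum_distrib_left[symmetric] Suc sum_distrib_right)
  finally show ?case .
qed

lemma seq_prob_abs: "\<bar>seq_prob f s\<bar> = seq_prob (\<lambda>k. \<bar>f k\<bar>) s"
  unfolding seq_prob_def by (induction s) (auto simp: abs_mult)

lemma seq_prob_diff:
  fixes a b :: "real \<Rightarrow> real"
  assumes K: "finite K" and Ca: "(\<Sum>k\<in>K. \<bar>a k\<bar>) \<le> C" and Cb: "(\<Sum>k\<in>K. \<bar>b k\<bar>) \<le> C"
  shows "(\<Sum>s\<in>samples K N. \<bar>seq_prob a s - seq_prob b s\<bar>)
          \<le> real N * (\<Sum>k\<in>K. \<bar>a k - b k\<bar>) * C ^ (N - 1)"
proof (induction N)
  case 0 then show ?case by (simp add: samples_0 seq_prob_def)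
next
  case (Suc N)
  define D where "D = (\<Sum>k\<in>K. \<bar>a k - b k\<bar>)"
  define T where "T = (\<Sum>s\<in>samples K N. \<bar>seq_prob a s - seq_prob b s\<bar>)"
  have C0: "0 \<le> C" using Ca order_trans[OF sum_nonneg] by (meson abs_ge_zero)
  have D0: "0 \<le> D" unfolding D_def by (simp add: sum_nonneg)
  have "(\<Sum>s\<in>samples K (Suc N). \<bar>seq_prob a s - seq_prob b s\<bar>)
      = (\<Sum>k\<in>K. \<Sum>s\<in>samples K N. \<bar>a k * seq_prob a s - b k * seq_prob b s\<bar>)"
    by (simp add: sum_samples_Suc[OF K] seq_prob_def)
  also have "\<dots> \<le> (\<Sum>k\<in>K. \<Sum>s\<in>samples K N. \<bar>a k - b k\<bar> * seq_prob (\<lambda>k. \<bar>a k\<bar>) s + \<bar>b k\<bar> * \<bar>seq_prob a s - seq_prob b s\<bar>)"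
  proof (intro sum_mono)
    fix k s
    have "a k * seq_prob a s - b k * seq_prob b s = (a k - b k) * seq_prob a s + b k * (seq_prob a s - seq_prob b s)"
      by (simp add: algebra_simps)
    then show "\<bar>a k * seq_prob a s - b k * seq_prob b s\<bar> \<le> \<bar>a k - b k\<bar> * seq_prob (\<lambda>k. \<bar>a k\<bar>) s + \<bar>b k\<bar> * \<bar>seq_prob a s - seq_prob b s\<bar>"
      by (metis abs_mult abs_triangle_ineq seq_prob_abs)
  qed
  also have "\<dots> = D * (\<Sum>k\<in>K. \<bar>a k\<bar>) ^ N + (\<Sum>k\<in>K. \<bar>b k\<bar>) * T"
    by (simp add: sum.distrib sum_distrib_left[symmetric] sum_distrib_right sum_seq_prob[OF K] D_def T_def)
  also have "\<dots> \<le> D * C ^ N + C * (real N * D * C ^ (N - 1))"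
  proof (intro add_mono mult_mono)
    show "(\<Sum>k\<in>K. \<bar>a k\<bar>) ^ N \<le> C ^ N" by (intro power_mono Ca) (simp add: sum_nonneg)
    show "T \<le> real N * D * C ^ (N - 1)" using Suc unfolding T_def D_def .
  qed (auto simp: D0 C0 Cb T_def sum_nonneg)
  also have "\<dots> = real (Suc N) * D * C ^ (Suc N - 1)"
    by (cases N) (auto simp: algebra_simps)
  finally show ?case unfolding D_def .
qed



lemma poly_exp_lim:
  assumes c: "c > 0"
  shows "((\<lambda>n::nat. real n ^ d * exp (- c * real n)) \<longlongrightarrow> 0) sequentially"
proof -
  have lim: "((\<lambda>n::nat. (c * real n) ^ d / exp (c * real n)) \<longlongrightarrow> 0) sequentially"
    by (rule filterlim_compose[OF tendsto_power_div_exp_0])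
       (intro filterlim_tendsto_pos_mult_at_top[OF tendsto_const c] filterlim_real_sequentially)
  have "((\<lambda>n::nat. (1 / c ^ d) * ((c * real n) ^ d / exp (c * real n))) \<longlongrightarrow> (1 / c ^ d) * 0) sequentially"
    by (intro tendsto_intros lim)
  moreover have "(\<lambda>n::nat. (1 / c ^ d) * ((c * real n) ^ d / exp (c * real n))) = (\<lambda>n. real n ^ d * exp (- c * real n))"
    using c by (auto simp: fun_eq_iff power_mult_distrib exp_minus field_simps)
  ultimately show ?thesis by simp
qed

lemma poly_exp_bigo:
  fixes f h :: "nat \<Rightarrow> real"
  assumes f: "f \<in> O(\<lambda>n. real n ^ d)" and h: "h \<in> O(\<lambda>n. exp (- c * real n))" and c: "c > 0"
  shows "(\<lambda>n. f n * h n) \<in> O(\<lambda>n. exp (- (c/2) * real n))"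
proof -
  have 1: "(\<lambda>n. f n * h n) \<in> O(\<lambda>n. real n ^ d * exp (- c * real n))"
    by (rule landau_o.big.mult[OF f h])
  have 2: "(\<lambda>n::nat. real n ^ d * exp (- (c/2) * real n)) \<in> O(\<lambda>_. 1)"
    by (rule bigoI_tendsto[where c=0]) (use poly_exp_lim[of "c/2" d] c in auto)
  have 3: "(\<lambda>n::nat. (real n ^ d * exp (- (c/2) * real n)) * exp (- (c/2) * real n)) \<in> O(\<lambda>n. 1 * exp (- (c/2) * real n))"
    by (rule landau_o.big.mult[OF 2]) simp
  have eq: "(\<lambda>n::nat. (real n ^ d * exp (- (c/2) * real n)) * exp (- (c/2) * real n)) = (\<lambda>n. real n ^ d * exp (- c * real n))"
    by (auto simp: fun_eq_iff mult.assoc simp flip: exp_add)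
  show ?thesis using landau_o.big_trans[OF 1 3[unfolded eq]] by simp
qed

lemma exp_lim0:
  fixes f :: "nat \<Rightarrow> real"
  assumes "f \<in> O(\<lambda>n. exp (- c * real n))" "c > 0"
  shows "f \<longlonglongrightarrow> 0"
proof -
  have "(\<lambda>n::nat. exp (- c * real n)) \<in> o(\<lambda>_. 1)"
    by (rule smalloI_tendsto) (use poly_exp_lim[of c 0] assms(2) in auto)
  then have "f \<in> o(\<lambda>_. 1)" using landau_o.big_small_trans[OF assms(1)] by blast
  from smalloD_tendsto[OF this] show ?thesis by simp
qed

lemma powr_exp_bigo:
  fixes h :: "nat \<Rightarrow> real"
  assumes h: "h \<in> O(\<lambda>n. exp (- c * real n))" and h0: "\<forall>n. h n \<ge> 0" and a: "a \<ge> 0"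
  shows "(\<lambda>n. h n powr a) \<in> O(\<lambda>n. exp (- (a * c) * real n))"
proof -
  have "(\<lambda>n. \<bar>h n\<bar> powr a) \<in> O(\<lambda>n. \<bar>exp (- c * real n)\<bar> powr a)"
    by (rule bigo_powr[OF h a])
  moreover have "(\<lambda>n. \<bar>exp (- c * real n)\<bar> powr a) = (\<lambda>n. exp (- (a * c) * real n))"
    by (auto simp: fun_eq_iff powr_def)
  ultimately show ?thesis using h0 by simp
qed



lemma good_set:
  fixes \<Omega> :: "'a measure" and f :: "real \<Rightarrow> 'a \<Rightarrow> real" and \<mu> :: "real \<Rightarrow> real"
  assumes P: "prob_space \<Omega>" and K: "finite K"
    and meas: "\<forall>k\<in>K. f k \<in> borel_measurable \<Omega>"
    and conc: "\<forall>k\<in>K. \<forall>\<delta>'>0. measure \<Omega> {\<alpha>\<in>space \<Omega>. \<bar>f k \<alpha> - \<mu> k\<bar> \<ge> \<delta>'} \<le> b / \<delta>'^2"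
  shows "\<exists>G\<in>sets \<Omega>. measure \<Omega> G \<ge> 1 - real (card K) * (16 * b powr (1/2)) \<and>
           (\<forall>\<alpha>\<in>G. \<forall>k\<in>K. \<bar>f k \<alpha> - \<mu> k\<bar> \<le> b powr (1/4) / 4)"
proof -
  interpret prob_space \<Omega> by (rule P)
  define t where "t = b powr (1/4) / 4"
  define bad where "bad k = {\<alpha>\<in>space \<Omega>. \<bar>f k \<alpha> - \<mu> k\<bar> > t}" for k
  have bad_sets: "bad k \<in> sets \<Omega>" if "k \<in> K" for k
  proof -
    have [measurable]: "f k \<in> borel_measurable \<Omega>" using meas that by auto
    show ?thesis unfolding bad_def by measurable
  qed
  have bad_meas: "measure \<Omega> (bad k) \<le> 16 * b powr (1/2)" if k: "k \<in> K" for k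
  proof -
    have "measure \<Omega> {\<alpha>\<in>space \<Omega>. \<bar>f k \<alpha> - \<mu> k\<bar> \<ge> 1} \<le> b / 1^2" by (rule conc[rule_format, OF k]) simp
    then have b0: "0 \<le> b" using measure_nonneg[of \<Omega>] by (metis order_trans power_one div_by_1)
    show ?thesis
    proof (cases "b = 0")
      case False
      then have bpos: "b > 0" using b0 by simp
      then have tpos: "t > 0" unfolding t_def by simp
      have "measure \<Omega> (bad k) \<le> measure \<Omega> {\<alpha>\<in>space \<Omega>. \<bar>f k \<alpha> - \<mu> k\<bar> \<ge> t}"
      proof (rule finite_measure_mono)
        have [measurable]: "f k \<in> borel_measurable \<Omega>" using meas k by auto
        show "{\<alpha>\<in>space \<Omega>. \<bar>f k \<alpha> - \<mu> k\<bar> \<ge> t} \<in> sets \<Omega>" by measurable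
      qed (auto simp: bad_def)
      also have "\<dots> \<le> b / t^2" by (rule conc[rule_format, OF k tpos])
      also have "b / t^2 = 16 * b powr (1/2)"
      proof -
        have "b powr (1/4) * b powr (1/4) = b powr (1/2)" by (simp flip: powr_add)
        then have "t^2 = b powr (1/2) / 16" unfolding t_def power2_eq_square by simp
        moreover have "b = b powr (1/2) * b powr (1/2)" using bpos by (simp flip: powr_add)
        ultimately have e1: "t^2 = b powr (1/2) / 16" and e2: "b = b powr (1/2) * b powr (1/2)" by auto
        have bp: "b powr (1/2) > 0" using bpos by simp
        have "b / t^2 = 16 * (b / b powr (1/2))" unfolding e1 by simp
        also have "b / b powr (1/2) = b powr (1/2)" using bp by (subst e2) simp
        finally show ?thesis .
      qed
      finally show ?thesis .
    next
      case True
      then have t0: "t = 0" unfolding t_def by simp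
      define A where "A m = {\<alpha>\<in>space \<Omega>. \<bar>f k \<alpha> - \<mu> k\<bar> \<ge> 1 / Suc m}" for m :: nat
      have A_null: "A m \<in> null_sets \<Omega>" for m
      proof -
        have [measurable]: "f k \<in> borel_measurable \<Omega>" using meas k by auto
        have As: "A m \<in> sets \<Omega>" unfolding A_def by measurable
        have "measure \<Omega> (A m) \<le> b / (1 / Suc m)^2" unfolding A_def by (rule conc[rule_format, OF k]) simp
        then have "measure \<Omega> (A m) = 0" using True measure_nonneg[of \<Omega> "A m"] by simp
        then show ?thesis using As by (simp add: emeasure_eq_measure null_setsI)
      qed
      have "bad k = (\<Union>m. A m)"
      proof safe
        fix x assume x: "x \<in> bad k"
        then have pos: "\<bar>f k x - \<mu> k\<bar> > 0" using t0 by (simp add: bad_def)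
        obtain m :: nat where "1 / Suc m < \<bar>f k x - \<mu> k\<bar>" using reals_Archimedean[OF pos] by (auto simp: inverse_eq_divide)
        then show "x \<in> (\<Union>m. A m)" using x by (auto simp: A_def bad_def intro!: exI[of _ m])
      next
        fix x m assume "x \<in> A m"
        moreover have "(0::real) < 1 / Suc m" by simp
        ultimately show "x \<in> bad k" unfolding A_def bad_def t0 by auto
      qed
      then have "bad k \<in> null_sets \<Omega>" using A_null by auto
      then have "measure \<Omega> (bad k) = 0" by (simp add: measure_def null_setsD1)
      then show ?thesis using b0 by simp
    qed
  qed
  define G where "G = space \<Omega> - (\<Union>k\<in>K. bad k)"
  have U: "(\<Union>k\<in>K. bad k) \<in> sets \<Omega>" using bad_sets K by auto
  have "measure \<Omega> (\<Union>k\<in>K. bad k) \<le> (\<Sum>k\<in>K. measure \<Omega> (bad k))"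
    by (rule measure_UNION_le[OF K bad_sets])
  also have "\<dots> \<le> (\<Sum>k\<in>K. 16 * b powr (1/2))" by (rule sum_mono) (rule bad_meas)
  finally have "measure \<Omega> (\<Union>k\<in>K. bad k) \<le> real (card K) * (16 * b powr (1/2))" by simp
  moreover have "measure \<Omega> G = 1 - measure \<Omega> (\<Union>k\<in>K. bad k)"
    unfolding G_def by (rule prob_compl[OF U])
  moreover have "G \<in> sets \<Omega>" unfolding G_def using U by auto
  moreover have "\<forall>\<alpha>\<in>G. \<forall>k\<in>K. \<bar>f k \<alpha> - \<mu> k\<bar> \<le> t" unfolding G_def bad_def by auto
  ultimately show ?thesis unfolding t_def by (intro bexI[of _ G]) auto
qed



lemma guess_bound:
  fixes p \<mu> :: "real \<Rightarrow> real" and g :: "'b \<Rightarrow> real"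
  assumes K: "finite K" and mu0: "\<forall>k\<in>K. 0 \<le> \<mu> k" and mu1: "(\<Sum>k\<in>K. \<mu> k) = 1"
    and D: "(\<Sum>k\<in>K. \<bar>p k - \<mu> k\<bar>) \<le> e"
    and pw: "(1 + e) ^ (N - 1) \<le> 2"
    and g: "\<forall>y. 0 \<le> g y \<and> g y \<le> 1"
  shows "guess_success K N p \<mu> \<Phi> g \<le> 1/2 + real N * e"
proof -
  define D where "D = (\<Sum>k\<in>K. \<bar>p k - \<mu> k\<bar>)"
  have D0: "0 \<le> D" unfolding D_def by (simp add: sum_nonneg)
  have e0: "0 \<le> e" using D D0 unfolding D_def by linarith
  have Sa: "(\<Sum>k\<in>K. \<bar>p k\<bar>) \<le> 1 + D"
  proof -
    have "(\<Sum>k\<in>K. \<bar>p k\<bar>) \<le> (\<Sum>k\<in>K. \<mu> k + \<bar>p k - \<mu> k\<bar>)"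
      by (rule sum_mono) (use mu0 in auto)
    then show ?thesis by (simp add: sum.distrib mu1 D_def)
  qed
  have Sb: "(\<Sum>k\<in>K. \<bar>\<mu> k\<bar>) \<le> 1 + D" using mu0 mu1 D0 by simp
  define S where "S = samples K N"
  have Q1: "(\<Sum>s\<in>S. seq_prob \<mu> s) = 1" unfolding S_def by (simp add: sum_seq_prob[OF K] mu1)
  have T: "(\<Sum>s\<in>S. \<bar>seq_prob p s - seq_prob \<mu> s\<bar>) \<le> real N * D * (1 + D) ^ (N - 1)"
    unfolding S_def D_def by (rule seq_prob_diff[OF K Sa[unfolded D_def] Sb[unfolded D_def]])
  also have "\<dots> \<le> real N * e * (1 + e) ^ (N - 1)"
    by (intro mult_mono power_mono) (use D D0 e0 in \<open>auto simp: D_def\<close>)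
  also have "\<dots> \<le> real N * e * 2" by (rule mult_left_mono[OF pw]) (use e0 in simp)
  finally have T2: "(\<Sum>s\<in>S. \<bar>seq_prob p s - seq_prob \<mu> s\<bar>) \<le> 2 * real N * e" by simp
  have "guess_success K N p \<mu> \<Phi> g = (1/2) * ((\<Sum>s\<in>S. seq_prob \<mu> s) + (\<Sum>s\<in>S. (seq_prob p s - seq_prob \<mu> s) * g (\<Phi> s)))"
    unfolding guess_success_def S_def by (simp add: sum.distrib[symmetric] algebra_simps)
  also have "\<dots> \<le> (1/2) * (1 + (\<Sum>s\<in>S. \<bar>seq_prob p s - seq_prob \<mu> s\<bar>))"
  proof -
    have "(\<Sum>s\<in>S. (seq_prob p s - seq_prob \<mu> s) * g (\<Phi> s)) \<le> (\<Sum>s\<in>S. \<bar>seq_prob p s - seq_prob \<mu> s\<bar>)"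
    proof (rule sum_mono)
      fix s
      have "(seq_prob p s - seq_prob \<mu> s) * g (\<Phi> s) \<le> \<bar>seq_prob p s - seq_prob \<mu> s\<bar> * g (\<Phi> s)"
        using g by (intro mult_right_mono) auto
      also have "\<dots> \<le> \<bar>seq_prob p s - seq_prob \<mu> s\<bar>"
        using g by (intro mult_left_le) auto
      finally show "(seq_prob p s - seq_prob \<mu> s) * g (\<Phi> s) \<le> \<bar>seq_prob p s - seq_prob \<mu> s\<bar>" .
    qed
    then show ?thesis using Q1 by simp
  qed
  also have "\<dots> \<le> 1/2 + real N * e" using T2 by simp
  finally show ?thesis .
qed



lemma pow_bound:
  fixes e :: real and m :: nat
  assumes e0: "0 \<le> e" and small: "real m * e \<le> 1/4"
  shows "(1 + e) ^ m \<le> 2"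
proof -
  have "(1 + e) ^ m \<le> exp e ^ m" by (intro power_mono) (use e0 in auto)
  also have "\<dots> = exp (real m * e)" by (simp add: exp_of_nat_mult)
  also have "\<dots> \<le> 1 + 2 * norm (real m * e)"
    using exp_bound_lemma[of "real m * e"] small e0 by auto
  also have "\<dots> \<le> 2" using small e0 by simp
  finally show ?thesis .
qed

theorem corollary3:
  fixes \<Omega> :: "nat \<Rightarrow> 'a measure"
    and \<rho> :: "nat \<Rightarrow> 'a \<Rightarrow> complex mat"
    and K :: "nat \<Rightarrow> real set"
    and M :: "nat \<Rightarrow> real \<Rightarrow> complex mat"
    and \<mu> :: "nat \<Rightarrow> real \<Rightarrow> real"
    and \<beta> :: "nat \<Rightarrow> real"
    and N :: "nat \<Rightarrow> nat"
  assumes prob: "\<forall>n. prob_space (\<Omega> n)"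
    and states: "\<forall>n. \<forall>\<alpha>\<in>space (\<Omega> n). density_matrix (2^n) (\<rho> n \<alpha>)"
    and povm: "\<forall>n. is_povm (2^n) (K n) (M n)"
    and povm_size: "poly_bounded (\<lambda>n. real (card (K n)))"
    and meas: "\<forall>n. \<forall>k\<in>K n. (\<lambda>\<alpha>. outcome_prob (\<rho> n \<alpha>) (M n k)) \<in> borel_measurable (\<Omega> n)"
    and conc: "\<forall>n. \<forall>k\<in>K n. \<forall>\<delta>'>0.
       measure (\<Omega> n) {\<alpha>\<in>space (\<Omega> n). \<bar>outcome_prob (\<rho> n \<alpha>) (M n k) - \<mu> n k\<bar> \<ge> \<delta>'}
         \<le> \<beta> n / \<delta>'^2"
    and beta_small: "exp_small \<beta>"
    and fixed_dist: "\<forall>n. (\<forall>k\<in>K n. 0 \<le> \<mu> n k) \<and> (\<Sum>k\<in>K n. \<mu> n k) = 1"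
    and N_poly: "poly_bounded (\<lambda>n. real (N n))"
  shows "\<exists>\<delta> n0. exp_small \<delta> \<and>
    (\<forall>n. \<exists>G\<in>sets (\<Omega> n). measure (\<Omega> n) G \<ge> 1 - \<delta> n \<and>
      (\<forall>\<alpha>\<in>G. \<forall>\<Phi> :: real list \<Rightarrow> real list. \<forall>g :: real list \<Rightarrow> real.
         (\<forall>y. 0 \<le> g y \<and> g y \<le> 1) \<longrightarrow>
           guess_success (K n) (N n) (\<lambda>k. outcome_prob (\<rho> n \<alpha>) (M n k)) (\<mu> n) \<Phi> g
             \<le> 1/2 + real (N n) * real (card (K n)) * \<beta> n powr (1/4) / 4
         \<and> (n \<ge> n0 \<longrightarrow>
           guess_success (K n) (N n) (\<lambda>k. outcome_prob (\<rho> n \<alpha>) (M n k)) (\<mu> n) \<Phi> g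
             \<le> 51/100)))"
proof -
  have Kfin: "finite (K n)" for n using povm unfolding is_povm_def by auto
  have Kne: "K n \<noteq> {}" for n
  proof
    assume "K n = {}"
    then have "(\<Sum>k\<in>K n. M n k $$ (0,0)) = 0" by simp
    moreover have "(\<Sum>k\<in>K n. M n k $$ (0,0)) = (1\<^sub>m (2^n)) $$ (0,0)"
      using povm unfolding is_povm_def by auto
    ultimately show False by simp
  qed
  have b0: "\<beta> n \<ge> 0" for n
  proof -
    obtain k where k: "k \<in> K n" using Kne by blast
    have "measure (\<Omega> n) {\<alpha>\<in>space (\<Omega> n). \<bar>outcome_prob (\<rho> n \<alpha>) (M n k) - \<mu> n k\<bar> \<ge> 1} \<le> \<beta> n / 1^2"
      by (rule conc[rule_format, OF k]) simp
    then show ?thesis using measure_nonneg[of "\<Omega> n"] by (metis order_trans power_one div_by_1)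
  qed
  obtain d1 where d1: "(\<lambda>n. real (N n)) \<in> O(\<lambda>n. real n ^ d1)" using N_poly unfolding poly_bounded_def by auto
  obtain d2 where d2: "(\<lambda>n. real (card (K n))) \<in> O(\<lambda>n. real n ^ d2)" using povm_size unfolding poly_bounded_def by auto
  obtain c where c: "c > 0" and bc: "\<beta> \<in> O(\<lambda>n. exp (- c * real n))" using beta_small unfolding exp_small_def by auto
  define x where "x n = real (N n) * real (card (K n)) * \<beta> n powr (1/4)" for n
  define e where "e n = real (card (K n)) * \<beta> n powr (1/4) / 4" for n
  have NK: "(\<lambda>n. real (N n) * real (card (K n))) \<in> O(\<lambda>n. real n ^ (d1 + d2))"
    using landau_o.big.mult[OF d1 d2] by (simp add: power_add)
  have b4: "(\<lambda>n. \<beta> n powr (1/4)) \<in> O(\<lambda>n. exp (- ((1/4) * c) * real n))"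
    by (rule powr_exp_bigo[OF bc]) (use b0 in auto)
  have "x \<in> O(\<lambda>n. exp (- (((1/4) * c)/2) * real n))"
    unfolding x_def by (rule poly_exp_bigo[OF NK b4]) (use c in simp)
  then have xlim: "x \<longlonglongrightarrow> 0" by (rule exp_lim0) (use c in simp)
  then have "eventually (\<lambda>n. x n < 1/25) sequentially" by (rule order_tendstoD) simp
  then obtain n0 where n0: "\<And>n. n \<ge> n0 \<Longrightarrow> x n < 1/25" unfolding eventually_sequentially by auto
  define good where "good n \<longleftrightarrow> (1 + e n) ^ (N n - 1) \<le> 2" for n
  have e0: "e n \<ge> 0" for n unfolding e_def by simp
  have good_ev: "good n" if "n \<ge> n0" for n
  proof -
    have "real (N n - 1) * e n \<le> real (N n) * e n" by (intro mult_right_mono) (auto simp: e0)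
    also have "\<dots> = x n / 4" unfolding x_def e_def by simp
    also have "\<dots> \<le> 1/4" using n0[OF that] by simp
    finally show ?thesis unfolding good_def by (intro pow_bound e0)
  qed
  define \<delta> where "\<delta> n = (if good n then real (card (K n)) * (16 * \<beta> n powr (1/2)) else 1)" for n
  have b2: "(\<lambda>n. 16 * \<beta> n powr (1/2)) \<in> O(\<lambda>n. exp (- ((1/2) * c) * real n))"
    using powr_exp_bigo[OF bc, of "1/2"] b0 by simp
  have "(\<lambda>n. real (card (K n)) * (16 * \<beta> n powr (1/2))) \<in> O(\<lambda>n. exp (- (((1/2) * c)/2) * real n))"
    by (rule poly_exp_bigo[OF d2 b2]) (use c in simp)
  moreover have ev: "eventually (\<lambda>n. \<delta> n = real (card (K n)) * (16 * \<beta> n powr (1/2))) sequentially"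
    unfolding eventually_sequentially using good_ev by (auto simp: \<delta>_def)
  ultimately have "\<delta> \<in> O(\<lambda>n. exp (- (((1/2) * c)/2) * real n))"
    by (subst landau_o.big.in_cong[OF ev])
  then have dsmall: "exp_small \<delta>" unfolding exp_small_def using c by (intro exI[of _ "((1/2) * c)/2"]) simp
  have main: "\<exists>G\<in>sets (\<Omega> n). measure (\<Omega> n) G \<ge> 1 - \<delta> n \<and>
      (\<forall>\<alpha>\<in>G. \<forall>\<Phi> :: real list \<Rightarrow> real list. \<forall>g :: real list \<Rightarrow> real.
         (\<forall>y. 0 \<le> g y \<and> g y \<le> 1) \<longrightarrow>
           guess_success (K n) (N n) (\<lambda>k. outcome_prob (\<rho> n \<alpha>) (M n k)) (\<mu> n) \<Phi> g
             \<le> 1/2 + real (N n) * real (card (K n)) * \<beta> n powr (1/4) / 4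
         \<and> (n \<ge> n0 \<longrightarrow>
           guess_success (K n) (N n) (\<lambda>k. outcome_prob (\<rho> n \<alpha>) (M n k)) (\<mu> n) \<Phi> g
             \<le> 51/100))" for n
  proof (cases "good n")
    case False
    then show ?thesis by (intro bexI[of _ "{}"]) (auto simp: \<delta>_def)
  next
    case True
    obtain G where G: "G \<in> sets (\<Omega> n)"
      and mG: "measure (\<Omega> n) G \<ge> 1 - real (card (K n)) * (16 * \<beta> n powr (1/2))"
      and close: "\<forall>\<alpha>\<in>G. \<forall>k\<in>K n. \<bar>outcome_prob (\<rho> n \<alpha>) (M n k) - \<mu> n k\<bar> \<le> \<beta> n powr (1/4) / 4"
      using good_set[OF prob[rule_format, of n] Kfin[of n] spec[OF meas, of n] spec[OF conc, of n]] by blast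
    show ?thesis
    proof (intro bexI[OF _ G] conjI ballI allI impI)
      show "1 - \<delta> n \<le> measure (\<Omega> n) G" using mG True by (simp add: \<delta>_def)
    next
      fix \<alpha> \<Phi> and g :: "real list \<Rightarrow> real"
      assume a: "\<alpha> \<in> G" and g: "\<forall>y. 0 \<le> g y \<and> g y \<le> 1"
      have D: "(\<Sum>k\<in>K n. \<bar>outcome_prob (\<rho> n \<alpha>) (M n k) - \<mu> n k\<bar>) \<le> e n"
      proof -
        have "(\<Sum>k\<in>K n. \<bar>outcome_prob (\<rho> n \<alpha>) (M n k) - \<mu> n k\<bar>) \<le> (\<Sum>k\<in>K n. \<beta> n powr (1/4) / 4)"
          by (rule sum_mono) (use close a in auto)
        then show ?thesis by (simp add: e_def)
      qed
      have gb: "guess_success (K n) (N n) (\<lambda>k. outcome_prob (\<rho> n \<alpha>) (M n k)) (\<mu> n) \<Phi> g \<le> 1/2 + real (N n) * e n"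
        by (rule guess_bound[OF Kfin _ _ D _ g]) (use fixed_dist True in \<open>auto simp: good_def\<close>)
      have eq: "real (N n) * e n = real (N n) * real (card (K n)) * \<beta> n powr (1/4) / 4"
        unfolding e_def by simp
      show "guess_success (K n) (N n) (\<lambda>k. outcome_prob (\<rho> n \<alpha>) (M n k)) (\<mu> n) \<Phi> g
             \<le> 1/2 + real (N n) * real (card (K n)) * \<beta> n powr (1/4) / 4"
        using gb eq by simp
      assume "n0 \<le> n"
      then have "x n < 1/25" by (rule n0)
      then have "real (N n) * e n \<le> 1/100" unfolding eq x_def by simp
      then show "guess_success (K n) (N n) (\<lambda>k. outcome_prob (\<rho> n \<alpha>) (M n k)) (\<mu> n) \<Phi> g \<le> 51/100"
        using gb by simp
    qed
  qed
  show ?thesis by (intro exI[of _ \<delta>] exI[of _ n0] conjI dsmall allI main)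
qed

end
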